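(* Let $\alpha(t)=\sum_na_nt^n$ be an adelic series on a number field $\mathbb{K}$ with $a_0=0$ and $a_1\neq0$. Then there exists an adelic series $\beta$ such that $\beta\circ\alpha(t)=t$.
   Context: For a number field $\mathbb{K}$ and a finite set $S$ of places containing the Archimedean ones, $\mathcal{O}_{\mathbb{K},S}$ is the ring of elements of $v$-norm $\le1$ for all $v\notin S$. A formal power series $\sum_na_nt^n$ is adelic on $\mathbb{K}$ if its coefficients lie in $\mathcal{O}_{\mathbb{K},S}$ for some such finite $S$ and, for every place $v$ of $\mathbb{K}$, its radius of convergence $\limsup_n|a_n|_v^{-1/n}$ is positive. *)

theory Defs
  imports "HOL-Computational_Algebra.Formal_Power_Series" "HOL-Library.Extended_Real"
    "HOL-Library.Liminf_Limsup"
begin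

definition number_field :: "'a::field_char_0 itself \<Rightarrow> bool" where
  "number_field _ \<longleftrightarrow>
     (\<exists>B::'a set. finite B \<and> (\<forall>x. \<exists>c. x = (\<Sum>b\<in>B. of_rat (c b) * b)))"

definition absval :: "('a::field \<Rightarrow> real) \<Rightarrow> bool" where
  "absval v \<longleftrightarrow> (\<forall>x. v x \<ge> 0) \<and> (\<forall>x. v x = 0 \<longleftrightarrow> x = 0) \<and>
     (\<forall>x y. v (x * y) = v x * v y) \<and> (\<forall>x y. v (x + y) \<le> v x + v y)"

definition nontrivial_absval :: "('a::field \<Rightarrow> real) \<Rightarrow> bool" where
  "nontrivial_absval v \<longleftrightarrow> absval v \<and> (\<exists>x. x \<noteq> 0 \<and> v x \<noteq> 1)"

definition archimedean_absval :: "('a::field \<Rightarrow> real) \<Rightarrow> bool" where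
  "archimedean_absval v \<longleftrightarrow> \<not> (\<forall>x y. v (x + y) \<le> max (v x) (v y))"

definition equiv_absval :: "('a::field \<Rightarrow> real) \<Rightarrow> ('a \<Rightarrow> real) \<Rightarrow> bool" where
  "equiv_absval v w \<longleftrightarrow> (\<exists>c>0. \<forall>x. w x = v x powr c)"

text \<open>Coefficients lie in \<open>O_{K,S}\<close> for some finite set \<open>S\<close> of places containing the
  Archimedean ones; places are represented by absolute values in \<open>S\<close> up to equivalence.\<close>
definition S_integral_coeffs :: "('a::field fps) \<Rightarrow> bool" where
  "S_integral_coeffs f \<longleftrightarrow>
     (\<exists>S. finite S \<and> (\<forall>w\<in>S. nontrivial_absval w) \<and>
        (\<forall>v. nontrivial_absval v \<and> archimedean_absval v \<longrightarrow> (\<exists>w\<in>S. equiv_absval w v)) \<and>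
        (\<forall>v. nontrivial_absval v \<and> \<not> (\<exists>w\<in>S. equiv_absval w v) \<longrightarrow>
              (\<forall>n. v (fps_nth f n) \<le> 1)))"

definition fps_radius_at :: "('a::field \<Rightarrow> real) \<Rightarrow> 'a fps \<Rightarrow> ereal" where
  "fps_radius_at v f = inverse (limsup (\<lambda>n. ereal (root n (v (fps_nth f n)))))"

definition adelic :: "'a::field fps \<Rightarrow> bool" where
  "adelic f \<longleftrightarrow> S_integral_coeffs f \<and>
     (\<forall>v. nontrivial_absval v \<longrightarrow> fps_radius_at v f > 0)"

end

theory Submission
  imports Defs "HOL-Computational_Algebra.Primes"
begin

unbundle fps_syntax
context
  fixes v :: "'a::field \<Rightarrow> real"
  assumes av: "absval v"
begin

lemma av_nonneg: "v x \<ge> 0" using av unfolding absval_def by auto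
lemma av_zero[simp]: "v 0 = 0" using av unfolding absval_def by auto
lemma av_eq0: "v x = 0 \<longleftrightarrow> x = 0" using av unfolding absval_def by auto
lemma av_pos: "x \<noteq> 0 \<Longrightarrow> v x > 0" using av_nonneg av_eq0 by (metis less_eq_real_def)
lemma av_mult: "v (x * y) = v x * v y" using av unfolding absval_def by auto
lemma av_tri: "v (x + y) \<le> v x + v y" using av unfolding absval_def by auto
lemma av_one[simp]: "v 1 = 1"
proof -
  have "v 1 = v 1 * v 1" using av_mult[of 1 1] by simp
  moreover have "v 1 \<noteq> 0" using av_eq0 by simp
  ultimately show ?thesis by simp
qed
lemma av_minus_one[simp]: "v (-1) = 1"
proof -
  have "v (-1) * v (-1) = 1" using av_mult[of "-1" "-1"] by simp
  then have "(v (-1) - 1) * (v (-1) + 1) = 0" by (simp add: algebra_simps)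
  with av_nonneg[of "-1"] show ?thesis by auto
qed
lemma av_uminus[simp]: "v (- x) = v x"
  using av_mult[of "-1" x] by simp
lemma av_inverse: "v (inverse x) = inverse (v x)"
proof (cases "x = 0")
  case False
  have "v x * v (inverse x) = 1" using av_mult[of x "inverse x"] False by simp
  then show ?thesis by (metis inverse_unique mult.commute)
qed simp
lemma av_divide: "v (x / y) = v x / v y"
  by (simp add: divide_inverse av_mult av_inverse)
lemma av_power: "v (x ^ n) = v x ^ n"
  by (induction n) (simp_all add: av_mult)
lemma av_diff: "v (x - y) \<le> v x + v y"
  using av_tri[of x "-y"] by simp
lemma av_rev: "v x - v y \<le> v (x - y)"
  using av_tri[of "x - y" y] by simp
lemma av_rev2: "v x - v y \<le> v (x + y)"
  using av_tri[of "x + y" "-y"] by simp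
lemma av_sum: "v (sum f A) \<le> (\<Sum>i\<in>A. v (f i))"
  by (induction A rule: infinite_finite_induct) (auto intro: order_trans[OF av_tri])
lemma av_of_nat_le: "v (of_nat n) \<le> of_nat n"
  using av_sum[of "\<lambda>_. 1" "{..<n}"] by simp
end

definition nonarch :: "('a::field \<Rightarrow> real) \<Rightarrow> bool" where
  "nonarch v \<longleftrightarrow> (\<forall>x y. v (x + y) \<le> max (v x) (v y))"

context
  fixes v :: "'a::field \<Rightarrow> real"
  assumes av: "absval v" and na: "nonarch v"
begin
lemma na_add: "v (x + y) \<le> max (v x) (v y)" using na unfolding nonarch_def by auto
lemma na_sum_le: "(\<And>i. i \<in> A \<Longrightarrow> v (f i) \<le> M) \<Longrightarrow> 0 \<le> M \<Longrightarrow> v (sum f A) \<le> M"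
proof (induction A rule: infinite_finite_induct)
  case (insert x F)
  have "v (sum f F) \<le> M" "v (f x) \<le> M" using insert by auto
  then show ?case using na_add[of "f x" "sum f F"] insert.hyps by simp
qed (auto simp: av)
lemma na_sum_less: "(\<And>i. i \<in> A \<Longrightarrow> v (f i) < M) \<Longrightarrow> 0 < M \<Longrightarrow> v (sum f A) < M"
proof (induction A rule: infinite_finite_induct)
  case (insert x F)
  have "v (sum f F) < M" "v (f x) < M" using insert by auto
  then show ?case using na_add[of "f x" "sum f F"] insert.hyps by simp
qed (auto simp: av)
lemma na_of_nat: "v (of_nat n) \<le> 1"
  using na_sum_le[of "{..<n}" "\<lambda>_. 1" 1] by (simp add: av)
lemma na_of_int: "v (of_int n) \<le> 1"
proof (cases "n \<ge> 0")
  case True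
  then obtain m where "n = int m" using nonneg_int_cases by blast
  then show ?thesis using na_of_nat[of m] by simp
next
  case False
  then have "n = - int (nat (-n))" by simp
  then obtain m where "n = - int m" by blast
  then show ?thesis using na_of_nat[of m] av_uminus[OF av] by simp
qed
end

lemma radius_pos_of_bound:
  assumes "\<And>n. n \<ge> 1 \<Longrightarrow> v (fps_nth f n) \<le> M ^ n" "M \<ge> 0" "\<And>x. v x \<ge> 0"
  shows "fps_radius_at v f > 0"
proof -
  have b: "ereal (root n (v (fps_nth f n))) \<le> ereal M" for n
  proof (cases "n = 0")
    case True then show ?thesis using assms(2) by simp
  next
    case False
    then have "root n (v (fps_nth f n)) \<le> root n (M ^ n)" using assms(1)[of n] by simp
    also have "\<dots> = M" using False assms(2) by (simp add: real_root_power_cancel)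
    finally show ?thesis by simp
  qed
  have b0: "ereal 0 \<le> ereal (root n (v (fps_nth f n)))" for n
    using assms(3) real_root_ge_zero by simp
  define l where "l = limsup (\<lambda>n. ereal (root n (v (fps_nth f n))))"
  have "l \<le> ereal M" unfolding l_def by (rule Limsup_bounded) (use b in auto)
  moreover have "ereal 0 \<le> l" unfolding l_def by (rule le_Limsup) (use b0 in auto)
  ultimately obtain r where r: "l = ereal r" "0 \<le> r" by (cases l) auto
  show ?thesis unfolding fps_radius_at_def l_def[symmetric] using r by auto
qed

lemma bound_of_radius_pos:
  assumes "fps_radius_at v f > 0" "\<And>x. v x \<ge> 0"
  shows "\<exists>R\<ge>1. \<forall>n\<ge>1. v (fps_nth f n) \<le> R ^ n"
proof -
  define l where "l = limsup (\<lambda>n. ereal (root n (v (fps_nth f n))))"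
  have "l \<noteq> \<infinity>" using assms(1) unfolding fps_radius_at_def l_def[symmetric] by auto
  have "\<exists>L. l < ereal L"
  proof (cases l)
    case (real r) then show ?thesis by (intro exI[of _ "r + 1"]) simp
  qed (use \<open>l \<noteq> \<infinity>\<close> in auto)
  then obtain L where L: "l < ereal L" by blast
  then have "eventually (\<lambda>n. ereal (root n (v (fps_nth f n))) < ereal L) sequentially"
    unfolding l_def by (rule Limsup_lessD)
  then obtain N where N: "\<And>n. n \<ge> N \<Longrightarrow> root n (v (fps_nth f n)) < L"
    unfolding eventually_sequentially by auto
  define R where "R = max 1 (max L (Max ((\<lambda>k. v (fps_nth f k)) ` {..N})))"
  have "R \<ge> 1" unfolding R_def by simp
  moreover have "v (fps_nth f n) \<le> R ^ n" if "n \<ge> 1" for n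
  proof (cases "n \<ge> N")
    case True
    have "v (fps_nth f n) = root n (v (fps_nth f n)) ^ n" using that assms(2)[of "fps_nth f n"] by simp
    also have "\<dots> \<le> R ^ n"
      by (rule power_mono) (use N[OF True] real_root_ge_zero[OF assms(2)] in \<open>auto simp: R_def\<close>)
    finally show ?thesis .
  next
    case False
    have "v (fps_nth f n) \<le> Max ((\<lambda>k. v (fps_nth f k)) ` {..N})" using False by (intro Max_ge) auto
    also have "\<dots> \<le> R" unfolding R_def by (intro max.coboundedI2 max.cobounded2)
    also have "R \<le> R ^ n" using \<open>R \<ge> 1\<close> that by (simp add: power_increasing[of 1 n R, simplified])
    finally show ?thesis .
  qed
  ultimately show ?thesis by blast
qed

lemma sum_inv_sq_le: "(\<Sum>i=1..m. 1 / (real i)^2) \<le> 2 - 1 / real (max 1 m)"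
proof (induction m)
  case (Suc m)
  show ?case
  proof (cases "m = 0")
    case False
    have "(\<Sum>i=1..Suc m. 1 / (real i)^2) = (\<Sum>i=1..m. 1 / (real i)^2) + 1 / (real (Suc m))^2" by simp
    also have "\<dots> \<le> 2 - 1 / real m + 1 / (real (Suc m))^2" using Suc False by simp
    also have "\<dots> \<le> 2 - 1 / real (Suc m)"
    proof -
      have "1 / (real (Suc m))^2 \<le> 1 / real m - 1 / real (Suc m)"
      proof -
        have "1 / real m - 1 / real (Suc m) = 1 / (real m * real (Suc m))"
          using False by (simp add: field_simps)
        moreover have "1 / (real (Suc m))^2 \<le> 1 / (real m * real (Suc m))"
          unfolding power2_eq_square using False by (intro divide_left_mono mult_right_mono) auto
        ultimately show ?thesis by simp
      qed
      then show ?thesis by simp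
    qed
    finally show ?thesis by simp
  qed simp
qed simp

lemma sum_inv_sq_le2: "(\<Sum>i=1..m. 1 / (real i)^2) \<le> 2"
  using sum_inv_sq_le[of m] by (smt (verit) of_nat_0_le_iff divide_nonneg_nonneg)

lemma conv_le: "(\<Sum>i=1..m-1. 1 / ((real i)^2 * (real (m - i))^2)) \<le> 8 / (real m)^2"
proof (cases "m \<ge> 1")
  case True
  have key: "1 / ((real i)^2 * (real (m - i))^2) \<le> 2 / (real m)^2 * (1 / (real i)^2 + 1 / (real (m - i))^2)"
    if "i \<in> {1..m-1}" for i
  proof -
    have i: "real i > 0" "real (m - i) > 0" "real i + real (m - i) = real m" using that True by auto
    define a where "a = real i" define b where "b = real (m - i)"
    have ab: "a > 0" "b > 0" "a + b = real m" using i unfolding a_def b_def by auto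
    have "1 / (a^2 * b^2) = (1/a + 1/b)^2 / (a + b)^2"
      using ab by (simp add: field_simps power2_eq_square)
    also have "\<dots> \<le> 2 * (1/a^2 + 1/b^2) / (a+b)^2"
    proof (rule divide_right_mono)
      have "(x+y)^2 \<le> 2*(x^2+y^2)" for x y :: real
        using zero_le_square[of "x-y"] by (simp add: power2_eq_square algebra_simps)
      from this[of "1/a" "1/b"] show "(1/a + 1/b)^2 \<le> 2 * (1/a^2 + 1/b^2)"
        by (simp add: power_one_over)
    qed simp
    finally show ?thesis using ab unfolding a_def b_def by (simp add: field_simps)
  qed
  have "(\<Sum>i=1..m-1. 1 / ((real i)^2 * (real (m - i))^2)) \<le>
        (\<Sum>i=1..m-1. 2 / (real m)^2 * (1 / (real i)^2 + 1 / (real (m - i))^2))"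
    by (rule sum_mono) (rule key)
  also have "\<dots> = 2 / (real m)^2 * ((\<Sum>i=1..m-1. 1 / (real i)^2) + (\<Sum>i=1..m-1. 1 / (real (m - i))^2))"
    by (simp only: sum.distrib[symmetric] sum_distrib_left)
  also have "(\<Sum>i=1..m-1. 1 / (real (m - i))^2) = (\<Sum>i=1..m-1. 1 / (real i)^2)"
    using sum.atLeastAtMost_rev[of "\<lambda>i. 1 / (real (m - i))^2" 1 "m-1"] True
    by (auto intro!: sum.cong)
  also have "2 / (real m)^2 * ((\<Sum>i=1..m-1. 1 / (real i)^2) + (\<Sum>i=1..m-1. 1 / (real i)^2)) \<le> 2 / (real m)^2 * (2 + 2)"
    using sum_inv_sq_le2[of "m-1"] by (intro mult_left_mono) auto
  finally show ?thesis by simp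
qed simp

lemma pow_bound:
  fixes f :: "'a::field fps"
  assumes av: "absval v" and f0: "f$0 = 0"
    and fb: "\<And>k. 1 \<le> k \<Longrightarrow> k < n \<Longrightarrow> v (f$k) \<le> L^k / (K * (real k)^2)"
    and K: "K > 0" and L: "L \<ge> 0"
  shows "1 \<le> j \<Longrightarrow> 1 \<le> m \<Longrightarrow> m \<le> n \<Longrightarrow> (2 \<le> j \<or> m < n) \<Longrightarrow>
     v ((f^j)$m) \<le> 8^(j-1) * L^m / (K^j * (real m)^2)"
proof (induction j arbitrary: m rule: nat_induct_at_least)
  case base
  then show ?case using fb[of m] by simp
next
  case (Suc j)
  define C where "C = 8^(j-1) * L^m / K^(Suc j)"
  have C0: "C \<ge> 0" unfolding C_def using K L by simp
  define g where "g i = C * (if i \<in> {1..m-1} then 1 / ((real i)^2 * (real (m - i))^2) else 0)" for i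
  have tb: "v (f$i * (f^j)$(m-i)) \<le> g i" if i: "i \<in> {0..m}" for i
  proof (cases "i = 0 \<or> i = m")
    case True
    then show ?thesis
    proof
      assume "i = 0" then show ?thesis using f0 av C0 by (simp add: g_def)
    next
      assume "i = m" then show ?thesis using f0 av C0 Suc.hyps Suc.prems
        by (simp add: g_def fps_power_zeroth zero_power)
    qed
  next
    case False
    then have i1: "1 \<le> i" "i \<le> m - 1" "i < n" using i Suc.prems by auto
    have b1: "v (f$i) \<le> L^i / (K * (real i)^2)" using fb i1 by auto
    have b2: "v ((f^j)$(m-i)) \<le> 8^(j-1) * L^(m-i) / (K^j * (real (m-i))^2)"
    proof -
      have "1 \<le> m - i" "m - i \<le> n" "m - i < n" using i1 Suc.prems False by auto
      then show ?thesis using Suc.IH[of "m - i"] by blast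
    qed
    have "v (f$i * (f^j)$(m-i)) = v (f$i) * v ((f^j)$(m-i))" by (simp add: av_mult[OF av])
    also have "\<dots> \<le> (L^i / (K * (real i)^2)) * (8^(j-1) * L^(m-i) / (K^j * (real (m-i))^2))"
      by (intro mult_mono b1 b2) (use av_nonneg[OF av] K L in auto)
    also have "\<dots> = C * (1 / ((real i)^2 * (real (m - i))^2))"
    proof -
      have "L^i * L^(m-i) = L^m" using i1 by (simp add: power_add[symmetric])
      then show ?thesis unfolding C_def by (simp add: field_simps)
    qed
    also have "\<dots> = g i" unfolding g_def using i1 by simp
    finally show ?thesis .
  qed
  have "v ((f^Suc j)$m) = v (\<Sum>i=0..m. f$i * (f^j)$(m-i))" by (simp add: fps_mult_nth)
  also have "\<dots> \<le> (\<Sum>i=0..m. v (f$i * (f^j)$(m-i)))" by (rule av_sum[OF av])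
  also have "\<dots> \<le> (\<Sum>i=0..m. g i)" by (rule sum_mono) (rule tb)
  also have "(\<Sum>i=0..m. g i) = C * (\<Sum>i=1..m-1. 1 / ((real i)^2 * (real (m - i))^2))"
  proof -
    have "(\<Sum>i=0..m. g i) = C * (\<Sum>i\<in>{0..m}. if i \<in> {1..m-1} then 1 / ((real i)^2 * (real (m - i))^2) else 0)"
      unfolding g_def by (simp only: sum_distrib_left)
    also have "\<dots> = C * (\<Sum>i\<in>{0..m} \<inter> {1..m-1}. 1 / ((real i)^2 * (real (m - i))^2))"
      by (simp only: sum.inter_restrict[OF finite_atLeastAtMost])
    also have "{0..m} \<inter> {1..m-1} = {1..m-1}" by auto
    finally show ?thesis .
  qed
  also have "C * (\<Sum>i=1..m-1. 1 / ((real i)^2 * (real (m - i))^2)) \<le> C * (8 / (real m)^2)"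
    by (intro mult_left_mono conv_le C0)
  also have "\<dots> = 8^(Suc j - 1) * L^m / (K^Suc j * (real m)^2)"
    unfolding C_def using Suc.hyps by (cases j) (simp_all add: field_simps)
  finally show ?case .
qed

lemma fps_inv_nth_0[simp]: "fps_inv a $ 0 = 0"
  by (simp add: fps_inv_def)

lemma fps_inv_nth_1: "fps_inv a $ 1 = 1 / a $ 1"
  by (simp add: fps_inv_def)

lemma fps_inv_rec:
  fixes a :: "'a::field fps"
  assumes a0: "a$0 = 0" and a1: "a$1 \<noteq> 0" and n: "n \<ge> 2"
  shows "fps_inv a $ n = - (\<Sum>i=2..n. a$i * (fps_inv a ^ i)$n) / a$1"
proof -
  let ?b = "fps_inv a"
  have "(a oo ?b) $ n = 0" using fps_inv_right[OF a0 a1] n by simp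
  then have "(\<Sum>i=0..n. a$i * (?b^i)$n) = 0" by (simp add: fps_compose_nth)
  moreover have "{0..n} = insert 0 (insert 1 {2..n})" using n by auto
  ultimately have "a$1 * ?b$n + (\<Sum>i=2..n. a$i * (?b^i)$n) = 0" using a0 by simp
  then show ?thesis using a1 by (simp add: field_simps eq_neg_iff_add_eq_0)
qed

lemma half_geom: "(\<Sum>i=2..Suc n. (1/2::real)^(i-2)) = 2 - 2 * (1/2)^n"
proof (induction n)
  case (Suc n)
  have "{2..Suc (Suc n)} = insert (Suc (Suc n)) {2..Suc n}" by auto
  then have "(\<Sum>i=2..Suc (Suc n). (1/2::real)^(i-2)) = (1/2)^n + (\<Sum>i=2..Suc n. (1/2::real)^(i-2))"
    by simp
  then show ?case using Suc by simp
qed simp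

lemma geom_le:
  fixes q :: real
  assumes "0 \<le> q" "q \<le> 1/2"
  shows "(\<Sum>i=2..n. q^(i-1)) \<le> 2 * q"
proof -
  have "(\<Sum>i=2..n. q^(i-1)) \<le> (\<Sum>i=2..n. q * (1/2)^(i-2))"
  proof (rule sum_mono)
    fix i assume "i \<in> {2..n}"
    then have "i - 1 = Suc (i - 2)" by auto
    then have "q^(i-1) = q * q^(i-2)" by simp
    also have "\<dots> \<le> q * (1/2)^(i-2)" using assms by (intro mult_left_mono power_mono) auto
    finally show "q^(i-1) \<le> q * (1/2)^(i-2)" .
  qed
  also have "\<dots> = q * (\<Sum>i=2..n. (1/2::real)^(i-2))" by (simp add: sum_distrib_left)
  also have "(\<Sum>i=2..n. (1/2::real)^(i-2)) \<le> 2"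
  proof (cases n)
    case (Suc k) then show ?thesis using half_geom[of k] by simp
  qed simp
  then have "q * (\<Sum>i=2..n. (1/2::real)^(i-2)) \<le> q * 2" using assms by (intro mult_left_mono) auto
  finally show ?thesis by simp
qed

lemma inv_radius_bound:
  fixes a :: "'a::field fps"
  assumes av: "absval v" and a0: "a$0 = 0" and a1: "a$1 \<noteq> 0" and R: "R \<ge> 1"
    and aR: "\<And>n. n \<ge> 1 \<Longrightarrow> v (a$n) \<le> R^n"
  shows "\<exists>M\<ge>0. \<forall>n\<ge>1. v (fps_inv a $ n) \<le> M^n"
proof -
  let ?b = "fps_inv a"
  define c where "c = v (a$1)"
  have c: "c > 0" using av_pos[OF av a1] c_def by simp
  define K where "K = 16*R^2/c + 16*R"
  define L where "L = K / c"
  have K0: "16*R^2/c \<ge> 0" using c by simp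
  have K: "K > 0" "K \<ge> 16*R" "K \<ge> 16*R^2/c" using R K0 by (auto simp: K_def)
  have L: "L \<ge> 0" using K c by (simp add: L_def)
  have main: "n \<ge> 1 \<Longrightarrow> v (?b$n) \<le> L^n/(K*(real n)^2)" for n
  proof (induction n rule: less_induct)
    case (less n)
    show ?case
    proof (cases "n = 1")
      case True
      then show ?thesis using fps_inv_nth_1[of a] av_divide[OF av, of 1 "a$1"] c K
        by (simp add: L_def c_def av_one[OF av])
    next
      case False
      then have n2: "n \<ge> 2" using less.prems by auto
      have fb: "\<And>k. 1 \<le> k \<Longrightarrow> k < n \<Longrightarrow> v (?b$k) \<le> L^k/(K*(real k)^2)" using less.IH by auto
      have pb: "v ((?b^i)$n) \<le> 8^(i-1)*L^n/(K^i*(real n)^2)" if "i \<in> {2..n}" for i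
        using pow_bound[OF av fps_inv_nth_0 fb K(1) L, where j=i and m=n] that n2 by auto
      define q where "q = 8*R/K"
      have q: "0 \<le> q" "q \<le> 1/2" using K R by (auto simp: q_def field_simps)
      have "v (\<Sum>i=2..n. a$i * (?b^i)$n) \<le> (\<Sum>i=2..n. v (a$i) * v ((?b^i)$n))"
        using av_sum[OF av, of "\<lambda>i. a$i * (?b^i)$n" "{2..n}"] by (simp add: av_mult[OF av])
      also have "\<dots> \<le> (\<Sum>i=2..n. R^i * (8^(i-1)*L^n/(K^i*(real n)^2)))"
        by (intro sum_mono mult_mono aR pb) (use R in \<open>auto simp: av_nonneg[OF av]\<close>)
      also have "\<dots> = (\<Sum>i=2..n. L^n/(K*(real n)^2) * R * q^(i-1))"
      proof (rule sum.cong)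
        fix i assume "i \<in> {2..n}"
        then have i: "i = Suc (i - 1)" by auto
        have "R^i * (8^(i-1)*L^n/(K^i*(real n)^2)) = R * R^(i-1) * (8^(i-1)*L^n/(K * K^(i-1)*(real n)^2))"
          by (subst (1 2) i) simp
        also have "\<dots> = L^n/(K*(real n)^2) * R * q^(i-1)"
          using K by (simp add: q_def power_divide power_mult_distrib field_simps)
        finally show "R^i * (8^(i-1)*L^n/(K^i*(real n)^2)) = L^n/(K*(real n)^2) * R * q^(i-1)" .
      qed simp
      also have "\<dots> = L^n/(K*(real n)^2) * R * (\<Sum>i=2..n. q^(i-1))"
        by (simp add: sum_distrib_left)
      also have "\<dots> \<le> L^n/(K*(real n)^2) * R * (2*q)"
        by (intro mult_left_mono geom_le q) (use K L R in auto)
      also have "\<dots> \<le> L^n/(K*(real n)^2) * c"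
      proof -
        have "R * (2*q) = 16*R^2/K" by (simp add: q_def power2_eq_square)
        also have "\<dots> \<le> c" using K c by (simp add: field_simps)
        finally have X: "R * (2*q) \<le> c" .
        have D: "0 \<le> L^n/(K*(real n)^2)" using K L by simp
        show ?thesis using mult_left_mono[OF X D] by (simp only: mult.assoc)
      qed
      finally have S: "v (\<Sum>i=2..n. a$i * (?b^i)$n) \<le> L^n/(K*(real n)^2) * c" .
      have "v (?b$n) = v (\<Sum>i=2..n. a$i * (?b^i)$n) / c"
        using fps_inv_rec[OF a0 a1 n2] by (simp add: av_divide[OF av] av_uminus[OF av] c_def)
      also have "\<dots> \<le> L^n/(K*(real n)^2)" using S c by (simp add: field_simps)
      finally show ?thesis .
    qed
  qed
  define M where "M = L * max 1 (1/K)"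
  have "v (?b$n) \<le> M^n" if n: "n \<ge> 1" for n
  proof -
    have "v (?b$n) \<le> L^n/(K*(real n)^2)" using main n by auto
    also have "\<dots> \<le> L^n/K"
    proof -
      have "K \<le> K*(real n)^2" using n K by simp
      moreover have "0 < K * (real n)^2 * K" using K n by simp
      ultimately show ?thesis using K L by (intro divide_left_mono) auto
    qed
    also have "\<dots> = L^n * (1/K)" by simp
    also have "\<dots> \<le> L^n * (max 1 (1/K))^n"
    proof -
      have "max 1 (1/K) \<le> (max 1 (1/K))^n"
        using n by (intro power_increasing[of 1 n, simplified]) auto
      then show ?thesis using L by (intro mult_left_mono) auto
    qed
    also have "\<dots> = M^n" by (simp add: M_def power_mult_distrib)
    finally show ?thesis .
  qed
  moreover have "M \<ge> 0" using L by (simp add: M_def)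
  ultimately show ?thesis by blast
qed

lemma pow_int:
  fixes f :: "'a::field fps"
  assumes av: "absval v" and na: "nonarch v" and f0: "f$0 = 0"
    and fb: "\<And>k. k < n \<Longrightarrow> v (f$k) \<le> 1"
  shows "1 \<le> j \<Longrightarrow> m \<le> n \<Longrightarrow> (2 \<le> j \<or> m < n) \<Longrightarrow> v ((f^j)$m) \<le> 1"
proof (induction j arbitrary: m rule: nat_induct_at_least)
  case base
  then show ?case using fb[of m] by simp
next
  case (Suc j)
  have "v (f$i * (f^j)$(m-i)) \<le> 1" if i: "i \<in> {0..m}" for i
  proof (cases "i = 0 \<or> i = m")
    case True
    then show ?thesis
    proof
      assume "i = 0" then show ?thesis using f0 av by simp
    next
      assume "i = m" then show ?thesis using f0 av Suc.hyps
        by (simp add: fps_power_zeroth zero_power)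
    qed
  next
    case False
    then have "i < n" "m - i \<le> n" "m - i < n" using i Suc.prems by auto
    then have "v (f$i) \<le> 1" "v ((f^j)$(m-i)) \<le> 1" using fb Suc.IH by auto
    then show ?thesis using av_nonneg[OF av] by (simp add: av_mult[OF av] mult_le_one)
  qed
  then have "v (\<Sum>i=0..m. f$i * (f^j)$(m-i)) \<le> 1" by (intro na_sum_le[OF av na]) auto
  then show ?case by (simp add: fps_mult_nth)
qed

lemma inv_int:
  fixes a :: "'a::field fps"
  assumes av: "absval v" and na: "nonarch v" and a0: "a$0 = 0" and a1: "a$1 \<noteq> 0"
    and ab: "\<And>k. v (a$k) \<le> 1" and ai: "v (1 / a$1) \<le> 1"
  shows "v (fps_inv a $ n) \<le> 1"
proof (induction n rule: less_induct)
  case (less n)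
  let ?b = "fps_inv a"
  consider "n = 0" | "n = 1" | "n \<ge> 2" by linarith
  then show ?case
  proof cases
    case 1 then show ?thesis using av by simp
  next
    case 2 then show ?thesis using ai fps_inv_nth_1[of a] by simp
  next
    case 3
    have "v (a$i * (?b^i)$n) \<le> 1" if "i \<in> {2..n}" for i
    proof -
      have "v ((?b^i)$n) \<le> 1" using pow_int[OF av na fps_inv_nth_0 less.IH, where j=i and m=n] that by auto
      then show ?thesis using ab[of i] av_nonneg[OF av] by (simp add: av_mult[OF av] mult_le_one)
    qed
    then have S: "v (\<Sum>i=2..n. a$i * (?b^i)$n) \<le> 1" by (intro na_sum_le[OF av na]) auto
    have "v (?b$n) = v (\<Sum>i=2..n. a$i * (?b^i)$n) * v (1 / a$1)"
      using fps_inv_rec[OF a0 a1 3] by (simp add: av_divide[OF av] av_uminus[OF av] av_one[OF av])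
    also have "\<dots> \<le> 1" using S ai av_nonneg[OF av] by (simp add: mult_le_one)
    finally show ?thesis .
  qed
qed

lemma nt_av: "nontrivial_absval v \<Longrightarrow> absval v" unfolding nontrivial_absval_def by simp

lemma equiv_refl: "absval v \<Longrightarrow> equiv_absval v v"
  unfolding equiv_absval_def by (intro exI[of _ 1]) (auto simp: av_nonneg)

lemma equiv_sym: assumes "absval v" "equiv_absval v w" shows "equiv_absval w v"
proof -
  obtain c where c: "c > 0" "\<And>x. w x = v x powr c" using assms(2) unfolding equiv_absval_def by auto
  have "v x = w x powr (1/c)" for x
    using c av_nonneg[OF assms(1), of x] by (simp add: powr_powr)
  then show ?thesis unfolding equiv_absval_def using c by (intro exI[of _ "1/c"]) auto
qed

lemma nt_gt1: assumes "nontrivial_absval v" obtains y where "v y > 1"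
proof -
  have av: "absval v" using assms nt_av by auto
  obtain x where x: "x \<noteq> 0" "v x \<noteq> 1" using assms unfolding nontrivial_absval_def by auto
  have "v x > 0" using av_pos[OF av x(1)] .
  show ?thesis
  proof (cases "v x > 1")
    case True then show ?thesis using that by auto
  next
    case False
    then have "v (inverse x) > 1" using x \<open>v x > 0\<close> by (simp add: av_inverse[OF av] one_less_inverse)
    then show ?thesis using that by auto
  qed
qed

lemma equiv_crit:
  assumes nv: "nontrivial_absval v" and nw: "nontrivial_absval w"
    and H: "\<And>x. v x < 1 \<Longrightarrow> w x < 1"
  shows "equiv_absval v w"
proof -
  have av: "absval v" and aw: "absval w" using nv nw nt_av by auto
  have gt: "w x > 1" if "v x > 1" for x
  proof -
    have x: "x \<noteq> 0" using that av by auto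
    have "v (inverse x) < 1" using that by (simp add: av_inverse[OF av] inverse_less_1_iff)
    then have "w (inverse x) < 1" by (rule H)
    then show ?thesis using av_pos[OF aw x] by (simp add: av_inverse[OF aw] inverse_less_1_iff)
  qed
  obtain y where y: "v y > 1" using nt_gt1[OF nv] by auto
  have wy: "w y > 1" using gt[OF y] .
  define c where "c = ln (w y) / ln (v y)"
  have c: "c > 0" using y wy by (simp add: c_def)
  have key: "ln (w x) / ln (w y) = ln (v x) / ln (v y)" if vx: "v x > 1" for x
  proof -
    have wx: "w x > 1" using gt[OF vx] .
    define A where "A = ln (v x) / ln (v y)"
    define B where "B = ln (w x) / ln (w y)"
    have A0: "A > 0" "B > 0" using vx wx y wy by (auto simp: A_def B_def)
    have lt: "B < real m / real n" if "A < real m / real n" "n > 0" "m > 0" for m n :: nat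
    proof -
      have "real n * ln (v x) < real m * ln (v y)"
        using that y by (simp add: A_def field_simps)
      then have "ln (v x ^ n) < ln (v y ^ m)" by (simp add: ln_realpow)
      then have "v x ^ n < v y ^ m" using vx y by simp
      then have "v (x^n / y^m) < 1" using y by (simp add: av_divide[OF av] av_power[OF av])
      then have "w (x^n / y^m) < 1" by (rule H)
      then have "w x ^ n < w y ^ m" using wy by (simp add: av_divide[OF aw] av_power[OF aw])
      then have "ln (w x ^ n) < ln (w y ^ m)" using wx wy by simp
      then have "real n * ln (w x) < real m * ln (w y)" by (simp add: ln_realpow)
      then show ?thesis using that wy by (simp add: B_def field_simps)
    qed
    have gt': "B > real m / real n" if "A > real m / real n" "n > 0" "m > 0" for m n :: nat
    proof -
      have "real n * ln (v x) > real m * ln (v y)"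
        using that y by (simp add: A_def field_simps)
      then have "ln (v x ^ n) > ln (v y ^ m)" by (simp add: ln_realpow)
      then have "v x ^ n > v y ^ m" using vx y by simp
      then have "v (y^m / x^n) < 1" using vx by (simp add: av_divide[OF av] av_power[OF av])
      then have "w (y^m / x^n) < 1" by (rule H)
      then have "w x ^ n > w y ^ m" using wx by (simp add: av_divide[OF aw] av_power[OF aw])
      then have "ln (w x ^ n) > ln (w y ^ m)" using wx wy by simp
      then have "real n * ln (w x) > real m * ln (w y)" by (simp add: ln_realpow)
      then show ?thesis using that wy by (simp add: B_def field_simps)
    qed
    have rat_between: "\<exists>m n::nat. n > 0 \<and> m > 0 \<and> a < real m / real n \<and> real m / real n < b"
      if ab: "0 < a" "a < b" for a b :: real
    proof -
      obtain r where r: "r \<in> \<rat>" "a < r" "r < b" using Rats_dense_in_real[OF ab(2)] by auto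
      obtain i j where ij: "j > 0" "r = of_int i / of_int j" using Rats_cases'[OF r(1)] by metis
      have "i > 0" using ij r ab by (smt (verit) divide_nonpos_pos of_int_0_less_iff of_int_le_0_iff)
      then show ?thesis using ij r by (intro exI[of _ "nat i"] exI[of _ "nat j"]) auto
    qed
    have "B = A"
    proof (rule ccontr)
      assume "B \<noteq> A" then have "A < B \<or> B < A" by auto
      then show False
      proof
        assume "A < B"
        then obtain m n :: nat where "n > 0" "m > 0" "A < real m / real n" "real m / real n < B"
          using rat_between A0 by blast
        then show False using lt by fastforce
      next
        assume "B < A"
        then obtain m n :: nat where "n > 0" "m > 0" "B < real m / real n" "real m / real n < A"
          using rat_between A0 by blast
        then show False using gt' by fastforce
      qed
    qed
    then show ?thesis unfolding A_def B_def .
  qed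
  have main: "ln (w x) = c * ln (v x)" if x: "x \<noteq> 0" for x
  proof -
    have vx0: "v x > 0" "w x > 0" using av_pos[OF av x] av_pos[OF aw x] by auto
    consider "v x > 1" | "v x < 1" | "v x = 1" by linarith
    then show ?thesis
    proof cases
      case 1
      then show ?thesis using key[OF 1] y wy by (simp add: c_def field_simps)
    next
      case 2
      then have "v (inverse x) > 1" using vx0 by (simp add: av_inverse[OF av] one_less_inverse)
      from key[OF this] have k: "ln (w (inverse x)) / ln (w y) = ln (v (inverse x)) / ln (v y)" .
      have e: "ln (w (inverse x)) = - ln (w x)" "ln (v (inverse x)) = - ln (v x)"
        by (subst av_inverse[OF aw], rule ln_inverse) (subst av_inverse[OF av], rule ln_inverse)
      from k[unfolded e] show ?thesis using y wy vx0
        by (simp add: c_def field_simps)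
    next
      case 3
      have "w x \<le> 1"
      proof (rule ccontr)
        assume "\<not> w x \<le> 1"
        then have "w x > 1" by simp
        then obtain n where "w x ^ n > w y"
          using real_arch_pow by blast
        moreover have "v (x^n / y) < 1" using 3 y by (simp add: av_divide[OF av] av_power[OF av])
        then have "w (x^n / y) < 1" by (rule H)
        then have "w x ^ n < w y" using wy by (simp add: av_divide[OF aw] av_power[OF aw])
        ultimately show False by simp
      qed
      moreover have "w x \<ge> 1"
      proof (rule ccontr)
        assume "\<not> w x \<ge> 1"
        then have "w x < 1" by simp
        then have "inverse (w x) > 1" using vx0 by (simp add: one_less_inverse)
        then obtain n where nn: "inverse (w x) ^ n > w y"
          using real_arch_pow by blast
        have "v (inverse (x^n * y)) < 1" using 3 y
          by (simp add: av_inverse[OF av] av_mult[OF av] av_power[OF av] inverse_less_1_iff)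
        then have "w (inverse (x^n * y)) < 1" by (rule H)
        moreover have "w (inverse (x^n * y)) = inverse (w x ^ n * w y)"
          by (simp only: av_inverse[OF aw] av_mult[OF aw] av_power[OF aw])
        ultimately have "inverse (w x ^ n * w y) < 1" by simp
        moreover have "w x ^ n * w y > 0" using vx0 wy by simp
        ultimately have "w x ^ n * w y > 1" using inverse_less_1_iff[of "w x ^ n * w y"] by linarith
        then have "inverse (w x) ^ n < w y" using wy vx0
          by (simp add: power_inverse field_simps)
        then show False using nn by simp
      qed
      ultimately show ?thesis using 3 by simp
    qed
  qed
  have "w x = v x powr c" for x
  proof (cases "x = 0")
    case True then show ?thesis using av aw by simp
  next
    case False
    have "w x = exp (ln (w x))" using av_pos[OF aw False] by simp
    also have "\<dots> = exp (c * ln (v x))" using main[OF False] by simp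
    also have "\<dots> = v x powr c" using av_pos[OF av False] by (simp add: powr_def)
    finally show ?thesis .
  qed
  then show ?thesis unfolding equiv_absval_def using c by auto
qed

lemma lim_small:
  assumes av: "absval w" and wz: "w z < 1"
  shows "(\<lambda>r. w (z^r / (1 + z^r))) \<longlonglongrightarrow> 0"
proof (rule tendsto_sandwich[of "\<lambda>_. 0" _ _ "\<lambda>r. 2 * w z ^ r"])
  have p: "(\<lambda>r. w z ^ r) \<longlonglongrightarrow> 0" using wz av_nonneg[OF av, of z] by (intro LIMSEQ_power_zero) auto
  then show "(\<lambda>r. 2 * w z ^ r) \<longlonglongrightarrow> 0" using tendsto_mult_right_zero by blast
  have "eventually (\<lambda>r. w z ^ r < 1/2) sequentially" using order_tendstoD(2)[OF p, of "1/2"] by simp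
  then show "eventually (\<lambda>r. w (z^r / (1 + z^r)) \<le> 2 * w z ^ r) sequentially"
  proof (rule eventually_mono)
    fix r assume r: "w z ^ r < 1/2"
    have "1 - w z ^ r \<le> w (1 + z^r)" using av_rev2[OF av, of 1 "z^r"] by (simp add: av_power[OF av] av_one[OF av])
    then have d: "w (1 + z^r) \<ge> 1/2" using r by linarith
    have "w (z^r / (1 + z^r)) = w z ^ r / w (1 + z^r)" by (simp add: av_divide[OF av] av_power[OF av])
    also have "\<dots> \<le> w z ^ r / (1/2)"
      using d by (intro divide_left_mono) (auto simp: av_nonneg[OF av])
    finally show "w (z^r / (1 + z^r)) \<le> 2 * w z ^ r" by simp
  qed
qed (auto simp: av_nonneg[OF av])

lemma lim_big0:
  assumes av: "absval w" and wz: "w z > 1"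
  shows "(\<lambda>r. w (1 / (1 + z^r))) \<longlonglongrightarrow> 0"
proof (rule tendsto_sandwich[of "\<lambda>_. 0" _ _ "\<lambda>r. 2 * inverse (w z) ^ r"])
  have p: "(\<lambda>r. inverse (w z) ^ r) \<longlonglongrightarrow> 0"
  proof (intro LIMSEQ_power_zero)
    have "inverse (w z) < 1" "inverse (w z) > 0" using wz by (auto simp: inverse_less_1_iff)
    then show "norm (inverse (w z)) < 1" by simp
  qed
  then show "(\<lambda>r. 2 * inverse (w z) ^ r) \<longlonglongrightarrow> 0" using tendsto_mult_right_zero by blast
  have "eventually (\<lambda>r. inverse (w z) ^ r < 1/2) sequentially" using order_tendstoD(2)[OF p, of "1/2"] by simp
  then show "eventually (\<lambda>r. w (1 / (1 + z^r)) \<le> 2 * inverse (w z) ^ r) sequentially"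
  proof (rule eventually_mono)
    fix r assume r: "inverse (w z) ^ r < 1/2"
    have wr: "w z ^ r > 2" using r wz by (simp add: power_inverse field_simps)
    have "w z ^ r - 1 \<le> w (z^r + 1)" using av_rev2[OF av, of "z^r" 1] by (simp add: av_power[OF av] av_one[OF av])
    then have d: "w (1 + z^r) \<ge> w z ^ r / 2" using wr by (simp add: add.commute)
    have "w (1 / (1 + z^r)) = 1 / w (1 + z^r)" by (simp add: av_divide[OF av] av_one[OF av])
    also have "\<dots> \<le> 1 / (w z ^ r / 2)"
      using d wr by (intro divide_left_mono) auto
    also have "\<dots> = 2 * inverse (w z) ^ r" by (simp add: power_inverse field_simps)
    finally show "w (1 / (1 + z^r)) \<le> 2 * inverse (w z) ^ r" .
  qed
qed (auto simp: av_nonneg[OF av])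

lemma nz_big: assumes av: "absval w" and wz: "w z > 1" and r: "r \<ge> 1"
  shows "1 + z^r \<noteq> 0"
proof
  assume "1 + z^r = 0"
  then have "z^r = -1" by (simp add: eq_neg_iff_add_eq_0 add.commute)
  then have "w z ^ r = 1" by (metis av_minus_one[OF av] av_power[OF av])
  moreover have "w z ^ r > 1" using wz r by (simp add: one_less_power)
  ultimately show False by simp
qed

lemma lim_big1:
  assumes av: "absval w" and wz: "w z > 1"
  shows "(\<lambda>r. w (z^r / (1 + z^r))) \<longlonglongrightarrow> 1"
proof (rule tendsto_sandwich[of "\<lambda>r. 1 - w (1 / (1 + z^r))" _ _ "\<lambda>r. 1 + w (1 / (1 + z^r))"])
  have l: "(\<lambda>r. w (1 / (1 + z^r))) \<longlonglongrightarrow> 0" by (rule lim_big0[OF av wz])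
  show "(\<lambda>r. 1 - w (1 / (1 + z^r))) \<longlonglongrightarrow> 1" using tendsto_diff[OF tendsto_const l] by simp
  show "(\<lambda>r. 1 + w (1 / (1 + z^r))) \<longlonglongrightarrow> 1" using tendsto_add[OF tendsto_const l] by simp
  have e: "z^r / (1 + z^r) = 1 - 1 / (1 + z^r)" if "r \<ge> 1" for r
    using nz_big[OF av wz that] by (simp add: field_simps)
  show "eventually (\<lambda>r. 1 - w (1 / (1 + z^r)) \<le> w (z^r / (1 + z^r))) sequentially"
    using eventually_ge_at_top[of 1]
    by (rule eventually_mono) (simp add: e av_rev[OF av, of 1, simplified av_one[OF av]])
  show "eventually (\<lambda>r. w (z^r / (1 + z^r)) \<le> 1 + w (1 / (1 + z^r))) sequentially"
    using eventually_ge_at_top[of 1]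
    by (rule eventually_mono) (simp add: e av_diff[OF av, of 1, simplified av_one[OF av]])
qed

definition pw_ineq :: "('a::field \<Rightarrow> real) set \<Rightarrow> bool" where
  "pw_ineq V \<longleftrightarrow> (\<forall>v\<in>V. \<forall>w\<in>V. v \<noteq> w \<longrightarrow> \<not> equiv_absval v w)"

lemma pair_sep:
  assumes nv: "nontrivial_absval v" and nw: "nontrivial_absval w"
    and ne1: "\<not> equiv_absval v w" and ne2: "\<not> equiv_absval w v"
  obtains y where "v y > 1" "w y < 1"
proof -
  have av: "absval v" and aw: "absval w" using nv nw nt_av by auto
  obtain a where a: "v a < 1" "\<not> w a < 1" using equiv_crit[OF nv nw] ne1 by blast
  obtain b where b: "w b < 1" "\<not> v b < 1" using equiv_crit[OF nw nv] ne2 by blast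
  have a0: "a \<noteq> 0" using a aw by auto
  have "v (b / a) > 1" using a b av_pos[OF av a0] by (simp add: av_divide[OF av] field_simps)
  moreover have "w (b / a) < 1" using a b av_pos[OF aw a0] by (simp add: av_divide[OF aw] field_simps)
  ultimately show ?thesis using that by blast
qed

lemma approx:
  assumes fin: "finite V" and nt: "\<And>v. v \<in> V \<Longrightarrow> nontrivial_absval v"
    and pw: "pw_ineq V" and v0: "v0 \<in> V"
  shows "\<exists>z. v0 z > 1 \<and> (\<forall>w\<in>V - {v0}. w z < 1)"
proof -
  have av0: "absval v0" using nt[OF v0] nt_av by auto
  have "finite W \<Longrightarrow> W \<subseteq> V - {v0} \<Longrightarrow> \<exists>z. v0 z > 1 \<and> (\<forall>w\<in>W. w z < 1)" for W
  proof (induction W rule: finite_induct)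
    case empty
    then show ?case using nt_gt1[OF nt[OF v0]] by blast
  next
    case (insert wn W)
    then obtain z where z: "v0 z > 1" "\<forall>w\<in>W. w z < 1" by auto
    have wn: "wn \<in> V" "wn \<noteq> v0" using insert by auto
    have awn: "absval wn" using nt[OF wn(1)] nt_av by auto
    have aW: "\<And>w. w \<in> W \<Longrightarrow> absval w" using insert nt nt_av by blast
    obtain y where y: "v0 y > 1" "wn y < 1"
      using pair_sep[OF nt[OF v0] nt[OF wn(1)]] pw v0 wn unfolding pw_ineq_def by metis
    consider "wn z < 1" | "wn z = 1" | "wn z > 1" by linarith
    then show ?case
    proof cases
      case 1 then show ?thesis using z by auto
    next
      case 2
      have "eventually (\<lambda>r. \<forall>w\<in>W. w z ^ r * w y < 1) sequentially"
      proof (rule eventually_ball_finite[OF insert.hyps(1)], rule ballI)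
        fix w assume w: "w \<in> W"
        have "(\<lambda>r. w z ^ r) \<longlonglongrightarrow> 0" using z w av_nonneg[OF aW[OF w], of z]
          by (intro LIMSEQ_power_zero) auto
        then have "(\<lambda>r. w z ^ r * w y) \<longlonglongrightarrow> 0" using tendsto_mult_left_zero by blast
        then show "eventually (\<lambda>r. w z ^ r * w y < 1) sequentially" using order_tendstoD(2) by fastforce
      qed
      then obtain r where r: "\<forall>w\<in>W. w z ^ r * w y < 1" using eventually_sequentially by auto
      have "v0 (z^r * y) > 1"
      proof -
        have "v0 z ^ r \<ge> 1" using z by (simp add: one_le_power)
        then have "v0 z ^ r * v0 y \<ge> 1 * v0 y" using y by (intro mult_right_mono) auto
        then have "v0 z ^ r * v0 y > 1" using y by linarith
        then show ?thesis by (simp add: av_mult[OF av0] av_power[OF av0])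
      qed
      moreover have "wn (z^r * y) < 1" using 2 y by (simp add: av_mult[OF awn] av_power[OF awn])
      moreover have "\<forall>w\<in>W. w (z^r * y) < 1" using r aW by (simp add: av_mult av_power)
      ultimately show ?thesis by (intro exI[of _ "z^r * y"]) auto
    next
      case 3
      define t where "t r = z^r / (1 + z^r)" for r
      have e1: "eventually (\<lambda>r. \<forall>w\<in>W. w (t r) * w y < 1) sequentially"
      proof (rule eventually_ball_finite[OF insert.hyps(1)], rule ballI)
        fix w assume w: "w \<in> W"
        have "(\<lambda>r. w (t r)) \<longlonglongrightarrow> 0" unfolding t_def using z w by (intro lim_small aW) auto
        then have "(\<lambda>r. w (t r) * w y) \<longlonglongrightarrow> 0" using tendsto_mult_left_zero by blast
        then show "eventually (\<lambda>r. w (t r) * w y < 1) sequentially" using order_tendstoD(2) by fastforce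
      qed
      have "(\<lambda>r. v0 (t r) * v0 y) \<longlonglongrightarrow> 1 * v0 y"
        unfolding t_def by (intro tendsto_mult lim_big1 av0 z tendsto_const)
      then have e2: "eventually (\<lambda>r. v0 (t r) * v0 y > 1) sequentially"
        using order_tendstoD(1) y by fastforce
      have "(\<lambda>r. wn (t r) * wn y) \<longlonglongrightarrow> 1 * wn y"
        unfolding t_def by (intro tendsto_mult lim_big1 awn 3 tendsto_const)
      then have e3: "eventually (\<lambda>r. wn (t r) * wn y < 1) sequentially"
        using order_tendstoD(2) y by fastforce
      obtain r where r: "\<forall>w\<in>W. w (t r) * w y < 1" "v0 (t r) * v0 y > 1" "wn (t r) * wn y < 1"
        using eventually_conj[OF e1 eventually_conj[OF e2 e3]] eventually_sequentially by auto
      show ?thesis using r aW av0 awn by (intro exI[of _ "t r * y"]) (simp add: av_mult)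
    qed
  qed
  from this[of "V - {v0}"] fin show ?thesis by auto
qed

locale padic_place =
  fixes p :: nat and v :: "'a::field_char_0 \<Rightarrow> real"
  assumes p: "prime p" and av: "absval v" and na: "nonarch v" and vp: "v (of_nat p) < 1"
begin

lemma vp_pos: "v (of_nat p) > 0"
  using p av_pos[OF av, of "of_nat p"] by (simp add: prime_gt_0_nat)

lemma unit: assumes "\<not> int p dvd m" shows "v (of_int m) = 1"
proof -
  have "prime (int p)" using p by simp
  then have "coprime (int p) m" using assms prime_imp_coprime by blast
  then obtain s t where st: "s * int p + t * m = 1" using bezout_int[of "int p" m] by auto
  have "1 = v (of_int (s * int p + t * m))" using st av by (simp add: av_one)
  also have "\<dots> = v (of_int s * of_nat p + of_int t * of_int m)" by simp
  also have "\<dots> \<le> max (v (of_int s) * v (of_nat p)) (v (of_int t) * v (of_int m))"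
    using na_add[OF av na, of "of_int s * of_nat p" "of_int t * of_int m"] by (simp add: av_mult[OF av])
  finally have 1: "1 \<le> max (v (of_int s) * v (of_nat p)) (v (of_int t) * v (of_int m))" .
  have "v (of_int s) * v (of_nat p) < 1"
  proof -
    have "v (of_int s) * v (of_nat p) \<le> 1 * v (of_nat p)"
      using na_of_int[OF av na, of s] vp_pos by (intro mult_right_mono) auto
    then show ?thesis using vp by linarith
  qed
  then have 2: "1 \<le> v (of_int t) * v (of_int m)" using 1 by linarith
  have "v (of_int t) * v (of_int m) \<le> v (of_int m)"
    using mult_right_mono[of "v (of_int t)" 1 "v (of_int m)"] na_of_int[OF av na, of t] av_nonneg[OF av, of "of_int m"] by simp
  then show ?thesis using 2 na_of_int[OF av na, of m] by linarith
qed

lemma int_rep: assumes "a \<noteq> 0" shows "v (of_int a) = v (of_nat p) ^ multiplicity (int p) a"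
proof -
  define k where "k = multiplicity (int p) a"
  obtain y where y: "a = int p ^ k * y" "\<not> int p dvd y"
  proof -
    have "prime (int p)" using p by simp
    then have "\<not> is_unit (int p)" using not_prime_unit by blast
    then show ?thesis using multiplicity_decompose'[of a "int p"] assms that unfolding k_def[symmetric] by blast
  qed
  have "v (of_int a) = v (of_int (int p ^ k * y))" using y(1) by (simp only:)
  also have "\<dots> = v (of_nat p) ^ k * v (of_int y)"
    by (simp add: av_mult[OF av] av_power[OF av])
  also have "v (of_int y) = 1" using unit y(2) by simp
  finally show ?thesis by (simp add: k_def)
qed

end

lemma rat_rep:
  fixes q :: rat
  assumes "q \<noteq> 0"
  shows "\<exists>k1 k2. \<forall>v::'a::field_char_0 \<Rightarrow> real. padic_place p v \<longrightarrow>
            v (of_rat q) = v (of_nat p) ^ k1 / v (of_nat p) ^ k2"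
proof -
  obtain a b where ab: "quotient_of q = (a, b)" by (cases "quotient_of q") auto
  have q: "q = of_int a / of_int b" using quotient_of_div[OF ab] .
  have b: "b > 0" using quotient_of_denom_pos[OF ab] .
  have a: "a \<noteq> 0" using assms q by auto
  show ?thesis
  proof (intro exI allI impI)
    fix v :: "'a \<Rightarrow> real" assume pv: "padic_place p v"
    interpret padic_place p v by fact
    have "of_rat q = (of_int a / of_int b :: 'a)" using q by (simp add: of_rat_divide)
    then show "v (of_rat q) = v (of_nat p) ^ multiplicity (int p) a / v (of_nat p) ^ multiplicity (int p) b"
      using int_rep[OF a] int_rep[of b] b by (simp add: av_divide[OF av])
  qed
qed

lemma padic_cmp:
  fixes v w :: "'a::field_char_0 \<Rightarrow> real"
  assumes pv: "padic_place p v" and pw: "padic_place p w"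
    and le: "v (of_rat q) \<le> v (of_rat q')"
  shows "w (of_rat q) \<le> w (of_rat q')"
proof (cases "q = 0")
  case True
  have aw: "absval w" using pw padic_place.av by auto
  show ?thesis using True by (simp add: av_zero[OF aw] av_nonneg[OF aw])
next
  case False
  have avv: "absval v" and aww: "absval w" using pv pw padic_place.av by auto
  show ?thesis
  proof (cases "q' = 0")
    case True
    then have "v (of_rat q) \<le> 0" using le avv by simp
    moreover have "v (of_rat q) > 0" using False av_pos[OF avv] by simp
    ultimately show ?thesis by simp
  next
    case q'0: False
    obtain k1 k2 where k: "\<And>u::'a \<Rightarrow> real. padic_place p u \<Longrightarrow> u (of_rat q) = u (of_nat p) ^ k1 / u (of_nat p) ^ k2"
      using rat_rep[OF False] by blast
    obtain l1 l2 where l: "\<And>u::'a \<Rightarrow> real. padic_place p u \<Longrightarrow> u (of_rat q') = u (of_nat p) ^ l1 / u (of_nat p) ^ l2"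
      using rat_rep[OF q'0] by blast
    have equiv: "u (of_rat q) \<le> u (of_rat q') \<longleftrightarrow> l1 + k2 \<le> k1 + l2" if pu: "padic_place p u" for u :: "'a \<Rightarrow> real"
    proof -
      define x where "x = u (of_nat p)"
      have x: "0 < x" "x < 1" using padic_place.vp_pos[OF pu] padic_place.vp[OF pu] by (auto simp: x_def)
      have "u (of_rat q) \<le> u (of_rat q') \<longleftrightarrow> x ^ k1 / x ^ k2 \<le> x ^ l1 / x ^ l2"
        using k[OF pu] l[OF pu] by (simp add: x_def)
      also have "\<dots> \<longleftrightarrow> x ^ k1 * x ^ l2 \<le> x ^ l1 * x ^ k2"
        using x by (simp add: field_simps)
      also have "\<dots> \<longleftrightarrow> x ^ (k1 + l2) \<le> x ^ (l1 + k2)" by (simp add: power_add)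
      also have "\<dots> \<longleftrightarrow> l1 + k2 \<le> k1 + l2" using x by simp
      finally show ?thesis .
    qed
    show ?thesis using equiv[OF pv] equiv[OF pw] le by blast
  qed
qed

lemma qvs: "vector_space (\<lambda>(q::rat) (x::'a::field_char_0). of_rat q * x)"
  by unfold_locales (simp_all add: algebra_simps of_rat_add of_rat_mult)

lemma finite_reps:
  assumes bound: "\<And>V. finite V \<Longrightarrow> V \<subseteq> P \<Longrightarrow> pw_ineq V \<Longrightarrow> card V \<le> N"
    and avP: "\<And>v. v \<in> P \<Longrightarrow> absval v"
  shows "\<exists>F. finite F \<and> F \<subseteq> P \<and> (\<forall>v\<in>P. \<exists>w\<in>F. equiv_absval w v)"
proof -
  define C where "C = card ` {V. finite V \<and> V \<subseteq> P \<and> pw_ineq V}"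
  have "C \<subseteq> {..N}"
  proof
    fix c assume "c \<in> C"
    then obtain V where "c = card V" "finite V" "V \<subseteq> P" "pw_ineq V" unfolding C_def by auto
    then show "c \<in> {..N}" using bound by simp
  qed
  then have Cfin: "finite C" by (rule finite_subset) simp
  have "{} \<in> {V. finite V \<and> V \<subseteq> P \<and> pw_ineq V}" unfolding pw_ineq_def by simp
  then have "C \<noteq> {}" unfolding C_def by blast
  then have "Max C \<in> C" using Cfin Max_in by blast
  then obtain F where F: "finite F" "F \<subseteq> P" "pw_ineq F" "card F = Max C" unfolding C_def by auto
  have "\<exists>w\<in>F. equiv_absval w v" if v: "v \<in> P" for v
  proof (rule ccontr)
    assume H: "\<not> (\<exists>w\<in>F. equiv_absval w v)"
    have vF: "v \<notin> F" using H equiv_refl[OF avP[OF v]] by blast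
    have "pw_ineq (insert v F)"
      unfolding pw_ineq_def
    proof (intro ballI impI)
      fix a b assume ab: "a \<in> insert v F" "b \<in> insert v F" "a \<noteq> b"
      show "\<not> equiv_absval a b"
      proof (cases "a = v")
        case True
        then have "b \<in> F" using ab by blast
        then show ?thesis using H True equiv_sym[OF avP[OF v]] by blast
      next
        case False
        then have a: "a \<in> F" using ab by blast
        show ?thesis
        proof (cases "b = v")
          case True then show ?thesis using H a by blast
        next
          case False then have "b \<in> F" using ab by blast
          then show ?thesis using F(3) a ab(3) unfolding pw_ineq_def by blast
        qed
      qed
    qed
    moreover have "finite (insert v F)" "insert v F \<subseteq> P" using F v by auto
    ultimately have "card (insert v F) \<in> C" unfolding C_def by blast
    then have "card (insert v F) \<le> Max C" using Cfin by simp
    then show False using F vF by simp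
  qed
  then show ?thesis using F by blast
qed

lemma card_bound:
  fixes B :: "'a::field_char_0 set" and V :: "('a \<Rightarrow> real) set"
  assumes finB: "finite B" and spB: "\<And>x. \<exists>c. x = (\<Sum>b\<in>B. of_rat (c b) * b)"
    and finV: "finite V" and PV: "\<And>v. v \<in> V \<Longrightarrow> nontrivial_absval v \<and> padic_place p v"
    and pw: "pw_ineq V"
  shows "card V \<le> card B"
proof (cases "V = {}")
  case True then show ?thesis by simp
next
  case False
  then obtain r0 where r0: "r0 \<in> V" by auto
  interpret Q: vector_space "\<lambda>(q::rat) (x::'a). of_rat q * x" by (rule qvs)
  have span: "Q.span B = UNIV"
  proof -
    have "x \<in> Q.span B" for x
    proof -
      obtain c where c: "x = (\<Sum>b\<in>B. of_rat (c b) * b)" using spB by blast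
      have "(\<Sum>b\<in>B. of_rat (c b) * b) \<in> Q.span B"
      proof (rule Q.span_sum)
        fix b assume b: "b \<in> B"
        show "of_rat (c b) * b \<in> Q.span B" using Q.span_scale[OF Q.span_base[OF b], of "c b"] by simp
      qed
      then show ?thesis using c by simp
    qed
    then show ?thesis by auto
  qed
  have nt: "\<And>v. v \<in> V \<Longrightarrow> nontrivial_absval v" and avV: "\<And>v. v \<in> V \<Longrightarrow> absval v"
    and pp: "\<And>v. v \<in> V \<Longrightarrow> padic_place p v" using PV nt_av by auto
  have "\<forall>v\<in>V. \<exists>z. v z > 1 \<and> (\<forall>w\<in>V-{v}. w z < 1)" using approx[OF finV nt pw] by blast
  then obtain z where z: "\<And>v. v \<in> V \<Longrightarrow> v (z v) > 1 \<and> (\<forall>w\<in>V-{v}. w (z v) < 1)" by metis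
  define \<epsilon> where "\<epsilon> = 1 / (2 * (real (card V) + 1))"
  have \<epsilon>: "\<epsilon> > 0" "\<epsilon> * (real (card V) + 1) = 1/2" "\<epsilon> \<le> 1/2" unfolding \<epsilon>_def by (auto simp: field_simps)
  have ev0: "eventually (\<lambda>r. \<forall>v\<in>V. v (1/(1+(z v)^r)) < \<epsilon> \<and> (\<forall>w\<in>V-{v}. w ((z v)^r/(1+(z v)^r)) < \<epsilon>)) sequentially"
  proof (rule eventually_ball_finite[OF finV], rule ballI)
    fix v assume v: "v \<in> V"
    have e1: "eventually (\<lambda>r. v (1/(1+(z v)^r)) < \<epsilon>) sequentially"
      using order_tendstoD(2)[OF lim_big0[OF avV[OF v] conjunct1[OF z[OF v]]] \<epsilon>(1)] .
    have e2: "eventually (\<lambda>r. \<forall>w\<in>V-{v}. w ((z v)^r/(1+(z v)^r)) < \<epsilon>) sequentially"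
    proof (rule eventually_ball_finite, simp add: finV, rule ballI)
      fix w assume w: "w \<in> V - {v}"
      have "w (z v) < 1" using z[OF v] w by blast
      moreover have "absval w" using avV w by blast
      ultimately have "(\<lambda>r. w ((z v)^r/(1+(z v)^r))) \<longlonglongrightarrow> 0" using lim_small by blast
      from order_tendstoD(2)[OF this \<epsilon>(1)]
      show "eventually (\<lambda>r. w ((z v)^r/(1+(z v)^r)) < \<epsilon>) sequentially" by simp
    qed
    show "eventually (\<lambda>r. v (1/(1+(z v)^r)) < \<epsilon> \<and> (\<forall>w\<in>V-{v}. w ((z v)^r/(1+(z v)^r)) < \<epsilon>)) sequentially"
      using eventually_conj[OF e1 e2] .
  qed
  obtain N where N: "\<And>n. n \<ge> N \<Longrightarrow> n \<ge> 1 \<and> (\<forall>v\<in>V. v (1/(1+(z v)^n)) < \<epsilon> \<and> (\<forall>w\<in>V-{v}. w ((z v)^n/(1+(z v)^n)) < \<epsilon>))"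
    using eventually_conj[OF eventually_ge_at_top[of 1] ev0] unfolding eventually_sequentially by blast
  define r where "r = N"
  have r1: "r \<ge> 1" and r: "\<forall>v\<in>V. v (1/(1+(z v)^r)) < \<epsilon> \<and> (\<forall>w\<in>V-{v}. w ((z v)^r/(1+(z v)^r)) < \<epsilon>)"
    using N[of N] unfolding r_def by auto
  define y where "y v = (z v)^r/(1+(z v)^r)" for v
  have ynear: "v (y v - 1) < \<epsilon>" if v: "v \<in> V" for v
  proof -
    have "1 + (z v)^r \<noteq> 0" using nz_big[OF avV[OF v] conjunct1[OF z[OF v]] r1] .
    then have "y v - 1 = - (1/(1+(z v)^r))" unfolding y_def by (simp add: field_simps)
    then show ?thesis using r v by (simp add: av_uminus[OF avV[OF v]])
  qed
  have ybig: "v (y v) \<ge> 1 - \<epsilon>" if v: "v \<in> V" for v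
    using av_rev2[OF avV[OF v], of 1 "y v - 1"] ynear[OF v] by (simp add: av_one[OF avV[OF v]])
  have ysmall: "w (y v) < \<epsilon>" if "v \<in> V" "w \<in> V" "w \<noteq> v" for v w
    using r that unfolding y_def by blast
  have inj: "inj_on y V"
  proof (rule inj_onI, rule ccontr)
    fix v w assume vw: "v \<in> V" "w \<in> V" "y v = y w" "v \<noteq> w"
    have "v (y w) < \<epsilon>" using ysmall[of w v] vw by auto
    moreover have "v (y v) \<ge> 1 - \<epsilon>" using ybig vw(1) by blast
    ultimately show False using vw(3) \<epsilon> by simp
  qed
  have indep: "Q.independent (y ` V)"
  proof
    assume "Q.dependent (y ` V)"
    then obtain T u where T: "finite T" "T \<subseteq> y ` V" "(\<Sum>x\<in>T. of_rat (u x) * x) = 0" "\<exists>x\<in>T. u x \<noteq> 0"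
      unfolding Q.dependent_explicit by auto
    define U where "U = {v\<in>V. y v \<in> T}"
    have UV: "U \<subseteq> V" unfolding U_def by auto
    have finU: "finite U" using finV UV finite_subset by blast
    have TU: "T = y ` U" using T(2) unfolding U_def by auto
    have injU: "inj_on y U" using inj UV inj_on_subset by blast
    define q where "q v = u (y v)" for v
    have sum0: "(\<Sum>v\<in>U. of_rat (q v) * y v) = 0"
      using T(3) unfolding TU sum.reindex[OF injU] q_def by simp
    obtain v1 where v1: "v1 \<in> U" "q v1 \<noteq> 0" using T(4) unfolding TU q_def by auto
    define f where "f v = r0 (of_rat (q v))" for v
    have "Max (f ` U) \<in> f ` U" using finU v1 by (intro Max_in) auto
    then obtain vs where vs: "vs \<in> U" "f vs = Max (f ` U)" by auto
    have fmax: "f v \<le> f vs" if "v \<in> U" for v using vs finU that by simp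
    have avr: "absval r0" using avV[OF r0] .
    have vsV: "vs \<in> V" using vs UV by auto
    have avs: "absval vs" using avV[OF vsV] .
    have "f v1 > 0" unfolding f_def using v1 av_pos[OF avr] by simp
    then have "f vs > 0" using fmax[OF v1(1)] by simp
    then have qvs0: "of_rat (q vs) \<noteq> (0::'a)" unfolding f_def using avr by auto
    define Qv where "Qv = vs (of_rat (q vs))"
    have Qv: "Qv > 0" unfolding Qv_def using av_pos[OF avs qvs0] .
    have cmp: "vs (of_rat (q v)) \<le> Qv" if "v \<in> U" for v
      unfolding Qv_def using padic_cmp[OF pp[OF r0] pp[OF vsV] fmax[OF that, unfolded f_def]] .
    have split: "of_rat (q vs) * y vs = - (\<Sum>v\<in>U-{vs}. of_rat (q v) * y v)"
      using sum0 sum.remove[OF finU vs(1), of "\<lambda>v. of_rat (q v) * y v"]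
      by (simp add: eq_neg_iff_add_eq_0)
    have L: "vs (of_rat (q vs) * y vs) \<ge> Qv * (1 - \<epsilon>)"
      unfolding av_mult[OF avs] Qv_def[symmetric] using ybig[OF vsV] Qv by (intro mult_left_mono) auto
    have "vs (\<Sum>v\<in>U-{vs}. of_rat (q v) * y v) \<le> (\<Sum>v\<in>U-{vs}. vs (of_rat (q v)) * vs (y v))"
      using av_sum[OF avs, of "\<lambda>v. of_rat (q v) * y v" "U-{vs}"] by (simp add: av_mult[OF avs])
    also have "\<dots> \<le> (\<Sum>v\<in>U-{vs}. Qv * \<epsilon>)"
    proof (rule sum_mono)
      fix v assume v: "v \<in> U - {vs}"
      then have "vs (y v) < \<epsilon>" using ysmall[of v vs] UV vsV by auto
      then show "vs (of_rat (q v)) * vs (y v) \<le> Qv * \<epsilon>"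
        using cmp[of v] v av_nonneg[OF avs] Qv by (intro mult_mono) auto
    qed
    also have "\<dots> = real (card (U - {vs})) * (Qv * \<epsilon>)" by simp
    also have "\<dots> \<le> real (card V) * (Qv * \<epsilon>)"
    proof -
      have "card (U - {vs}) \<le> card V" using finV UV by (meson Diff_subset card_mono subset_trans)
      then show ?thesis using Qv \<epsilon> by (intro mult_right_mono) auto
    qed
    finally have R: "vs (\<Sum>v\<in>U-{vs}. of_rat (q v) * y v) \<le> real (card V) * (Qv * \<epsilon>)" .
    have "Qv * (1 - \<epsilon>) \<le> real (card V) * (Qv * \<epsilon>)"
      using L R split by (simp add: av_uminus[OF avs])
    then have "Qv * 1 \<le> Qv * (\<epsilon> * (real (card V) + 1))" by (simp add: algebra_simps)
    then have "1 \<le> \<epsilon> * (real (card V) + 1)" using Qv by simp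
    then show False using \<epsilon> by simp
  qed
  have "card (y ` V) \<le> card B" using Q.independent_span_bound[OF finB indep] span by auto
  then show ?thesis using card_image[OF inj] by simp
qed

lemma prime_below:
  assumes av: "absval v" and na: "nonarch v"
  shows "n \<ge> 1 \<Longrightarrow> v (of_nat n) < 1 \<Longrightarrow> \<exists>p. prime p \<and> p dvd n \<and> v (of_nat p) < 1"
proof (induction n rule: less_induct)
  case (less n)
  show ?case
  proof (cases "n = 1")
    case True then show ?thesis using less.prems av by (simp add: av_one)
  next
    case False
    then obtain p where p: "prime p" "p dvd n" using prime_factor_nat by blast
    then obtain m where m: "n = p * m" by (auto elim: dvdE)
    have m1: "m \<ge> 1" using m less.prems by (cases m) auto
    have mn: "m < n" using m m1 prime_gt_1_nat[OF p(1)] by simp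
    show ?thesis
    proof (cases "v (of_nat p) < 1")
      case True then show ?thesis using p by blast
    next
      case False
      then have "v (of_nat p) = 1" using na_of_nat[OF av na, of p] by simp
      then have "v (of_nat m) < 1" using less.prems m by (simp add: av_mult[OF av])
      then obtain p' where "prime p'" "p' dvd m" "v (of_nat p') < 1" using less.IH[OF mn m1] by blast
      moreover have "p' dvd n" using m \<open>p' dvd m\<close> by simp
      ultimately show ?thesis by blast
    qed
  qed
qed

lemma bad_primes:
  fixes y :: "'a::field_char_0"
  assumes nf: "number_field TYPE('a)" and y0: "y \<noteq> 0"
  shows "\<exists>Pr. finite Pr \<and> (\<forall>v. absval v \<and> nonarch v \<and> v y > 1 \<longrightarrow> (\<exists>p\<in>Pr. prime p \<and> v (of_nat p) < 1))"
proof -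
  obtain B :: "'a set" where finB: "finite B" and spB: "\<And>x. \<exists>c. x = (\<Sum>b\<in>B. of_rat (c b) * b)"
    using nf unfolding number_field_def by blast
  interpret Q: vector_space "\<lambda>(q::rat) (x::'a). of_rat q * x" by (rule qvs)
  have span: "Q.span B = UNIV"
  proof -
    have "x \<in> Q.span B" for x
    proof -
      obtain c where c: "x = (\<Sum>b\<in>B. of_rat (c b) * b)" using spB by blast
      have "(\<Sum>b\<in>B. of_rat (c b) * b) \<in> Q.span B"
      proof (rule Q.span_sum)
        fix b assume b: "b \<in> B"
        show "of_rat (c b) * b \<in> Q.span B" using Q.span_scale[OF Q.span_base[OF b], of "c b"] by simp
      qed
      then show ?thesis using c by simp
    qed
    then show ?thesis by auto
  qed
  define N where "N = card B"
  show ?thesis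
  proof (cases "inj_on (\<lambda>k. y^k) {..N}")
    case False
    then obtain i j where ij: "i \<le> N" "j \<le> N" "i \<noteq> j" "y^i = y^j" unfolding inj_on_def by auto
    have "\<exists>d>0. y^d = 1"
    proof (cases "i < j")
      case True
      have "y^j = y^i * y^(j-i)" using True by (simp add: power_add[symmetric])
      then have "y^(j-i) = 1" using ij(4) y0 by simp
      then show ?thesis using True by (intro exI[of _ "j-i"]) auto
    next
      case False
      then have "j < i" using ij by auto
      have "y^i = y^j * y^(i-j)" using \<open>j < i\<close> by (simp add: power_add[symmetric])
      then have "y^(i-j) = 1" using ij(4) y0 by simp
      then show ?thesis using \<open>j < i\<close> by (intro exI[of _ "i-j"]) auto
    qed
    then obtain d where d: "d > 0" "y^d = 1" by blast
    have "\<not> (absval v \<and> nonarch v \<and> v y > 1)" for v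
    proof
      assume H: "absval v \<and> nonarch v \<and> v y > 1"
      then have "v y ^ d > 1" using d by (simp add: one_less_power)
      moreover have "v y ^ d = 1"
      proof -
        have av: "absval v" using H by blast
        have "v (y^d) = v 1" using d(2) by simp
        then show ?thesis by (simp add: av_one[OF av] av_power[OF av])
      qed
      ultimately show False by simp
    qed
    then show ?thesis by (intro exI[of _ "{}"]) auto
  next
    case True
    define P where "P = (\<lambda>k. y^k) ` {..N}"
    have cardP: "card P = N + 1" unfolding P_def using card_image[OF True] by simp
    have "Q.dependent P"
    proof (rule ccontr)
      assume "\<not> Q.dependent P"
      then have "card P \<le> card B" using Q.independent_span_bound[OF finB] span by auto
      then show False using cardP N_def by simp
    qed
    then obtain T u where T: "finite T" "T \<subseteq> P" "(\<Sum>x\<in>T. of_rat (u x) * x) = 0" "\<exists>x\<in>T. u x \<noteq> 0"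
      unfolding Q.dependent_explicit by auto
    define K where "K = {k\<in>{..N}. y^k \<in> T}"
    have TK: "T = (\<lambda>k. y^k) ` K" using T(2) unfolding K_def P_def by auto
    have "K \<subseteq> {..N}" unfolding K_def by blast
    then have injK: "inj_on (\<lambda>k. y^k) K" using inj_on_subset[OF True] by blast
    define c where "c k = (if k \<in> K then u (y^k) else 0)" for k
    have sumc: "(\<Sum>k\<in>{..N}. of_rat (c k) * y^k) = 0"
    proof -
      have "(\<Sum>k\<in>{..N}. of_rat (c k) * y^k) = (\<Sum>k\<in>K. of_rat (u (y^k)) * y^k)"
        unfolding c_def by (rule sum.mono_neutral_cong_right) (auto simp: K_def)
      also have "\<dots> = (\<Sum>x\<in>T. of_rat (u x) * x)" unfolding TK by (subst sum.reindex[OF injK]) (simp only: o_def)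
      finally show ?thesis using T(3) by simp
    qed
    define Z where "Z = {k. k \<le> N \<and> c k \<noteq> 0}"
    obtain x0 where x0: "x0 \<in> T" "u x0 \<noteq> 0" using T(4) by blast
    then obtain k0 where k0K: "k0 \<in> K" "x0 = y^k0" using TK by blast
    have "k0 \<le> N" using k0K(1) unfolding K_def by simp
    moreover have "c k0 \<noteq> 0" using k0K x0 unfolding c_def by simp
    ultimately have k0: "k0 \<in> Z" unfolding Z_def by simp
    have finZ: "finite Z" unfolding Z_def by auto
    define D where "D = Max Z"
    have DZ: "D \<in> Z" unfolding D_def using finZ k0 Max_in by blast
    have cD: "c D \<noteq> 0" "D \<le> N" using DZ unfolding Z_def by auto
    have cz: "c k = 0" if "D < k" "k \<le> N" for k
    proof (rule ccontr)
      assume "c k \<noteq> 0"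
      then have "k \<in> Z" using that unfolding Z_def by auto
      then have "k \<le> D" unfolding D_def using finZ by simp
      then show False using that by simp
    qed
    have sumD: "(\<Sum>k\<in>{..D}. of_rat (c k) * y^k) = 0"
    proof -
      have "(\<Sum>k\<in>{..N}. of_rat (c k) * y^k) = (\<Sum>k\<in>{..D}. of_rat (c k) * y^k)"
        using cD(2) by (intro sum.mono_neutral_cong_right) (auto intro: cz)
      then show ?thesis using sumc by simp
    qed
    define r where "r k = c k / c D" for k
    have yD: "y^D = - (\<Sum>k<D. of_rat (r k) * y^k)"
    proof -
      have "{..D} = insert D {..<D}" by auto
      then have "of_rat (c D) * y^D + (\<Sum>k<D. of_rat (c k) * y^k) = 0" using sumD by simp
      then have "y^D + (\<Sum>k<D. of_rat (c k) * y^k) / of_rat (c D) = 0"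
        using cD(1) by (simp add: field_simps)
      moreover have "(\<Sum>k<D. of_rat (c k) * y^k) / of_rat (c D) = (\<Sum>k<D. of_rat (r k) * y^k)"
        unfolding r_def by (simp add: sum_divide_distrib of_rat_divide field_simps)
      ultimately show ?thesis by (simp add: eq_neg_iff_add_eq_0)
    qed
    define den where "den k = nat (snd (quotient_of (r k)))" for k
    have den0: "den k > 0" for k unfolding den_def using quotient_of_denom_pos' by simp
    define Pr where "Pr = (\<Union>k<D. {p. p dvd den k})"
    have finPr: "finite Pr" unfolding Pr_def using den0 by auto
    have "\<exists>p\<in>Pr. prime p \<and> v (of_nat p) < 1" if H: "absval v" "nonarch v" "v y > 1" for v
    proof -
      have "\<exists>k<D. v (of_rat (r k)) > 1"
      proof (rule ccontr)
        assume "\<not> (\<exists>k<D. v (of_rat (r k)) > 1)"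
        then have le: "\<And>k. k < D \<Longrightarrow> v (of_rat (r k)) \<le> 1" by auto
        have "v (\<Sum>k<D. of_rat (r k) * y^k) < v y ^ D"
        proof (rule na_sum_less[OF H(1,2)])
          fix k assume "k \<in> {..<D}"
          then have k: "k < D" by simp
          have "v (of_rat (r k) * y^k) = v (of_rat (r k)) * v y ^ k" by (simp add: av_mult[OF H(1)] av_power[OF H(1)])
          also have "\<dots> \<le> v y ^ k" using le[OF k] H(3) by (simp add: mult_le_cancel_right1)
          also have "\<dots> < v y ^ D" using k H(3) by simp
          finally show "v (of_rat (r k) * y^k) < v y ^ D" .
        next
          show "0 < v y ^ D" using H(3) by simp
        qed
        moreover have "v (\<Sum>k<D. of_rat (r k) * y^k) = v y ^ D"
        proof -
          have "(\<Sum>k<D. of_rat (r k) * y^k) = - (y^D)" using yD by simp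
          then show ?thesis by (simp add: av_uminus[OF H(1)] av_power[OF H(1)])
        qed
        ultimately show False by simp
      qed
      then obtain k where k: "k < D" "v (of_rat (r k)) > 1" by blast
      obtain a b where ab: "quotient_of (r k) = (a, b)" by (cases "quotient_of (r k)") auto
      have b: "b > 0" using quotient_of_denom_pos[OF ab] .
      have "of_rat (r k) = (of_int a / of_int b :: 'a)" using quotient_of_div[OF ab] by (simp add: of_rat_divide)
      then have "v (of_int a) / v (of_int b) > 1" using k(2) by (simp add: av_divide[OF H(1)])
      moreover have "v (of_int a) \<le> 1" using na_of_int[OF H(1,2)] .
      moreover have "v (of_int b) > 0" using b av_pos[OF H(1)] by simp
      ultimately have "v (of_int b) < 1" by (simp add: field_simps)
      moreover have "(of_int b :: 'a) = of_nat (den k)" unfolding den_def ab using b by simp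
      ultimately have "v (of_nat (den k)) < 1" by simp
      then obtain p where "prime p" "p dvd den k" "v (of_nat p) < 1"
        using prime_below[OF H(1,2), of "den k"] den0[of k] by auto
      then show ?thesis using k(1) unfolding Pr_def by blast
    qed
    then show ?thesis using finPr by blast
  qed
qed

lemma reps_p:
  assumes nf: "number_field TYPE('a::field_char_0)" and p: "prime p"
  shows "\<exists>F. finite F \<and> F \<subseteq> {v::'a\<Rightarrow>real. nontrivial_absval v \<and> padic_place p v} \<and>
     (\<forall>v. nontrivial_absval v \<and> padic_place p v \<longrightarrow> (\<exists>w\<in>F. equiv_absval w v))"
proof -
  obtain B :: "'a set" where finB: "finite B" and spB: "\<And>x. \<exists>c. x = (\<Sum>b\<in>B. of_rat (c b) * b)"
    using nf unfolding number_field_def by blast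
  have "\<exists>F. finite F \<and> F \<subseteq> {v::'a\<Rightarrow>real. nontrivial_absval v \<and> padic_place p v} \<and>
     (\<forall>v\<in>{v::'a\<Rightarrow>real. nontrivial_absval v \<and> padic_place p v}. \<exists>w\<in>F. equiv_absval w v)"
  proof (rule finite_reps)
    fix V assume "finite V" "V \<subseteq> {v::'a\<Rightarrow>real. nontrivial_absval v \<and> padic_place p v}" "pw_ineq V"
    then show "card V \<le> card B" using card_bound[OF finB spB] by blast
  qed (auto simp: nt_av)
  then show ?thesis by auto
qed

theorem lemma3p1:
  fixes \<alpha> :: "'a::field_char_0 fps"
  assumes "number_field TYPE('a)"
    and "adelic \<alpha>"
    and "fps_nth \<alpha> 0 = 0"
    and "fps_nth \<alpha> 1 \<noteq> 0"
  shows "\<exists>\<beta>. adelic \<beta> \<and> \<beta> oo \<alpha> = fps_X"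
proof -
  note nf = assms(1) and a0 = assms(3) and a1 = assms(4)
  have Sint: "S_integral_coeffs \<alpha>" and rad: "\<And>v. nontrivial_absval v \<Longrightarrow> fps_radius_at v \<alpha> > 0"
    using assms(2) unfolding adelic_def by auto
  obtain S where S: "finite S" "\<forall>w\<in>S. nontrivial_absval w"
    "\<forall>v. nontrivial_absval v \<and> archimedean_absval v \<longrightarrow> (\<exists>w\<in>S. equiv_absval w v)"
    "\<forall>v. nontrivial_absval v \<and> \<not> (\<exists>w\<in>S. equiv_absval w v) \<longrightarrow> (\<forall>n. v (fps_nth \<alpha> n) \<le> 1)"
    using Sint unfolding S_integral_coeffs_def by blast
  define y where "y = 1 / fps_nth \<alpha> 1"
  have y0: "y \<noteq> 0" using a1 by (simp add: y_def)
  obtain Pr where Pr: "finite Pr"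
    "\<And>v. absval v \<Longrightarrow> nonarch v \<Longrightarrow> v y > 1 \<Longrightarrow> (\<exists>p\<in>Pr. prime p \<and> v (of_nat p) < 1)"
    using bad_primes[OF nf y0] by blast
  define Pr' where "Pr' = {p\<in>Pr. prime p}"
  define good where "good p G \<longleftrightarrow> finite G \<and> G \<subseteq> {v::'a\<Rightarrow>real. nontrivial_absval v \<and> padic_place p v} \<and>
     (\<forall>v. nontrivial_absval v \<and> padic_place p v \<longrightarrow> (\<exists>w\<in>G. equiv_absval w v))" for p G
  have ex: "\<exists>G. good p G" if "p \<in> Pr'" for p
  proof -
    have "prime p" using that unfolding Pr'_def by simp
    from reps_p[OF nf this] show ?thesis unfolding good_def .
  qed
  define F where "F p = (SOME G. good p G)" for p
  have F: "good p (F p)" if "p \<in> Pr'" for p unfolding F_def using someI_ex[OF ex[OF that]] .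
  define S' where "S' = S \<union> (\<Union>p\<in>Pr'. F p)"
  let ?\<beta> = "fps_inv \<alpha>"
  have "S_integral_coeffs ?\<beta>"
    unfolding S_integral_coeffs_def
  proof (intro exI[of _ S'] conjI allI impI ballI)
    have "finite Pr'" unfolding Pr'_def using Pr(1) by simp
    moreover have "finite (F p)" if "p \<in> Pr'" for p using F[OF that] unfolding good_def by blast
    ultimately show "finite S'" unfolding S'_def using S(1) by blast
  next
    fix w :: "'a \<Rightarrow> real" assume "w \<in> S'"
    then consider "w \<in> S" | p where "p \<in> Pr'" "w \<in> F p" unfolding S'_def by blast
    then show "nontrivial_absval w"
    proof cases
      case 1 then show ?thesis using S(2) by blast
    next
      case 2 then show ?thesis using F[OF 2(1)] unfolding good_def by blast
    qed
  next
    fix v :: "'a \<Rightarrow> real" assume "nontrivial_absval v \<and> archimedean_absval v"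
    then show "\<exists>w\<in>S'. equiv_absval w v" using S(3) unfolding S'_def by blast
  next
    fix v :: "'a \<Rightarrow> real" and n assume H: "nontrivial_absval v \<and> \<not> (\<exists>w\<in>S'. equiv_absval w v)"
    have av: "absval v" using H nt_av by blast
    have na: "nonarch v"
    proof (rule ccontr)
      assume "\<not> nonarch v"
      then have "archimedean_absval v" unfolding nonarch_def archimedean_absval_def by simp
      then obtain w where "w \<in> S" "equiv_absval w v" using S(3) H by blast
      then show False using H unfolding S'_def by blast
    qed
    have ab: "\<And>k. v (fps_nth \<alpha> k) \<le> 1" using S(4) H unfolding S'_def by blast
    have ai: "v (1 / fps_nth \<alpha> 1) \<le> 1"
    proof (rule ccontr)
      assume "\<not> v (1 / fps_nth \<alpha> 1) \<le> 1"
      then have "v y > 1" unfolding y_def by simp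
      then obtain p where p: "p \<in> Pr" "prime p" "v (of_nat p) < 1" using Pr(2)[OF av na] by blast
      have pv: "padic_place p v" using p av na by (simp add: padic_place_def)
      have pP: "p \<in> Pr'" using p unfolding Pr'_def by simp
      then obtain w where "w \<in> F p" "equiv_absval w v" using F[OF pP] H pv unfolding good_def by blast
      moreover note pP
      ultimately show False using H unfolding S'_def by blast
    qed
    show "v (fps_nth ?\<beta> n) \<le> 1" using inv_int[OF av na a0 a1 ab ai] .
  qed
  moreover have "fps_radius_at v ?\<beta> > 0" if nv: "nontrivial_absval v" for v
  proof -
    have av: "absval v" using nv nt_av by blast
    obtain R where R: "R \<ge> 1" "\<forall>n\<ge>1. v (fps_nth \<alpha> n) \<le> R ^ n"
      using bound_of_radius_pos[OF rad[OF nv] av_nonneg[OF av]] by blast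
    obtain M where M: "M \<ge> 0" "\<forall>n\<ge>1. v (fps_nth ?\<beta> n) \<le> M ^ n"
      using inv_radius_bound[OF av a0 a1 R(1)] R(2) by blast
    show ?thesis using radius_pos_of_bound[of v ?\<beta> M] M av_nonneg[OF av] by blast
  qed
  ultimately have "adelic ?\<beta>" unfolding adelic_def by blast
  moreover have "?\<beta> oo \<alpha> = fps_X" using fps_inv[OF a0 a1] .
  ultimately show ?thesis by blast
qed

end
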